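(* Let $(\Omega,\mathcal{F})$ be a measurable space, $\mathcal{P}$ a nonempty set of probability measures on it, $\hat{\mathbb{E}}[Z]=\sup_{P\in\mathcal{P}}E_P[Z]$, and let $X,Y$ be random variables with $\hat{\mathbb{E}}[X^2]+\hat{\mathbb{E}}[Y^2]<\infty$. Put $U=\frac{X+Y}{2}$ and $V=\frac{X-Y}{2}$. Then $$\max_{\beta\in\mathbb{R}}\min_{\alpha\in\mathbb{R}}\hat{\mathbb{E}}[(U-\alpha)^2-(V-\beta)^2]=\max_{\beta\in M_V}\min_{\alpha\in M_U}\hat{\mathbb{E}}[(U-\alpha)^2-(V-\beta)^2],$$ $$\min_{\alpha\in\mathbb{R}}\max_{\beta\in\mathbb{R}}\left(-\hat{\mathbb{E}}[-(U-\alpha)^2+(V-\beta)^2]\right)=\min_{\alpha\in M_U}\max_{\beta\in M_V}\left(-\hat{\mathbb{E}}[-(U-\alpha)^2+(V-\beta)^2]\right).$$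
   Context: For a random variable $W$ with $\hat{\mathbb{E}}[W^2]<\infty$: $\overline{\mu}_W=\hat{\mathbb{E}}[W]$, $\underline{\mu}_W=-\hat{\mathbb{E}}[-W]$, and $M_W=[\underline{\mu}_W,\overline{\mu}_W]$. *)

theory Defs
  imports "HOL-Probability.Probability"
begin

definition upper_exp :: "'a measure set \<Rightarrow> ('a \<Rightarrow> real) \<Rightarrow> real" where
  "upper_exp Ps Z = (SUP P\<in>Ps. (\<integral>\<omega>. Z \<omega> \<partial>P))"

definition mean_interval :: "'a measure set \<Rightarrow> ('a \<Rightarrow> real) \<Rightarrow> real set" where
  "mean_interval Ps W = {- upper_exp Ps (\<lambda>\<omega>. - W \<omega>) .. upper_exp Ps W}"

text \<open>v = max_{b in B} min_{a in A} f a b, with all the max/min attained.\<close>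
definition is_maxmin :: "real set \<Rightarrow> real set \<Rightarrow> (real \<Rightarrow> real \<Rightarrow> real) \<Rightarrow> real \<Rightarrow> bool" where
  "is_maxmin A B f v \<longleftrightarrow>
     (\<forall>b\<in>B. \<exists>a\<in>A. \<forall>a'\<in>A. f a b \<le> f a' b) \<and>
     (\<exists>b\<in>B. (INF a\<in>A. f a b) = v \<and> (\<forall>b'\<in>B. (INF a\<in>A. f a b') \<le> v))"

text \<open>v = min_{a in A} max_{b in B} f a b, with all the max/min attained.\<close>
definition is_minmax :: "real set \<Rightarrow> real set \<Rightarrow> (real \<Rightarrow> real \<Rightarrow> real) \<Rightarrow> real \<Rightarrow> bool" where
  "is_minmax A B f v \<longleftrightarrow>
     (\<forall>a\<in>A. \<exists>b\<in>B. \<forall>b'\<in>B. f a b' \<le> f a b) \<and>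
     (\<exists>a\<in>A. (SUP b\<in>B. f a b) = v \<and> (\<forall>a'\<in>A. v \<le> (SUP b\<in>B. f a' b)))"

end

theory Submission
  imports Defs
begin

lemma sup_le_shift:
  fixes f g :: "'p \<Rightarrow> real"
  assumes "S \<noteq> {}" "bdd_above (g ` S)" "\<And>x. x \<in> S \<Longrightarrow> f x \<le> g x + e"
  shows "(SUP x\<in>S. f x) \<le> (SUP x\<in>S. g x) + e"
proof -
  have "f x \<le> (SUP x\<in>S. g x) + e" if "x \<in> S" for x
    using assms(3)[OF that] cSUP_upper[OF that assms(2)] by linarith
  then show ?thesis using assms(1) by (intro cSUP_least) auto
qed

lemma core:
  fixes cu mu cv nu :: "'p \<Rightarrow> real" and Ps :: "'p set" and K :: real
  assumes ne: "Ps \<noteq> {}"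
   and bnd: "\<And>P. P \<in> Ps \<Longrightarrow> \<bar>cu P\<bar> \<le> K \<and> \<bar>mu P\<bar> \<le> K \<and> \<bar>cv P\<bar> \<le> K \<and> \<bar>nu P\<bar> \<le> K"
  defines "F \<equiv> \<lambda>a b. SUP P\<in>Ps. cu P - 2*a*mu P + a^2 - (cv P - 2*b*nu P + b^2)"
  shows "\<exists>v. is_maxmin UNIV UNIV F v \<and>
     is_maxmin {-(SUP P\<in>Ps. - mu P) .. (SUP P\<in>Ps. mu P)} {-(SUP P\<in>Ps. - nu P) .. (SUP P\<in>Ps. nu P)} F v"
proof -
  define q where "q = (\<lambda>P a b. cu P - 2*a*mu P + a^2 - (cv P - 2*b*nu P + b^2))"
  have F_q: "F a b = (SUP P\<in>Ps. q P a b)" for a b unfolding F_def q_def by simp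
  obtain P0 where P0: "P0 \<in> Ps" using ne by blast
  have K0: "0 \<le> K" using bnd[OF P0] by linarith
  have qbd: "q P a b \<le> 2*K + 2*(\<bar>a\<bar>*K) + a^2 + 2*(\<bar>b\<bar>*K)" if "P \<in> Ps" for P a b
  proof -
    have 1: "\<bar>a*mu P\<bar> \<le> \<bar>a\<bar>*K" using bnd[OF that] by (simp add: abs_mult mult_left_mono)
    have 2: "\<bar>b*nu P\<bar> \<le> \<bar>b\<bar>*K" using bnd[OF that] by (simp add: abs_mult mult_left_mono)
    have "q P a b = cu P - 2*(a*mu P) + a^2 - cv P + 2*(b*nu P) - b^2" unfolding q_def by simp
    then show ?thesis using 1 2 bnd[OF that] by (smt (verit) zero_le_power2)
  qed
  have bdd: "bdd_above ((\<lambda>P. q P a b) ` Ps)" for a b by (rule bdd_aboveI2, rule qbd)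
  have qa: "q P a b - q P a' b = (a - a')*(a + a' - 2*mu P)" for P a a' b
    unfolding q_def by (simp add: algebra_simps power2_eq_square)
  have qb: "q P a b' - q P a b = (b' - b)*(2*nu P - b - b')" for P a b b'
    unfolding q_def by (simp add: algebra_simps power2_eq_square)
  define lu where "lu = -(SUP P\<in>Ps. - mu P)"
  define hu where "hu = (SUP P\<in>Ps. mu P)"
  define lv where "lv = -(SUP P\<in>Ps. - nu P)"
  define hv where "hv = (SUP P\<in>Ps. nu P)"
  have bmu: "bdd_above (mu ` Ps)" "bdd_above ((\<lambda>P. - mu P) ` Ps)"
    "bdd_above (nu ` Ps)" "bdd_above ((\<lambda>P. - nu P) ` Ps)"
    using bnd by (auto intro!: bdd_aboveI2[where M=K] dest!: bnd)
  have lu_le: "lu \<le> mu P" "mu P \<le> hu" "lv \<le> nu P" "nu P \<le> hv" if "P \<in> Ps" for P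
    using cSUP_upper[OF that bmu(1)] cSUP_upper[OF that bmu(2)]
      cSUP_upper[OF that bmu(3)] cSUP_upper[OF that bmu(4)]
    unfolding lu_def hu_def lv_def hv_def by auto
  have Kb: "-K \<le> lu" "hu \<le> K" "-K \<le> lv" "hv \<le> K"
    unfolding lu_def hu_def lv_def hv_def using ne bnd
    by (auto intro!: cSUP_least simp: minus_le_iff dest!: bnd)
  have luhu: "lu \<le> hu" "lv \<le> hv" using lu_le[OF P0] by auto
  have Fa: "F a b \<le> F a' b + 4*K*\<bar>a - a'\<bar>" if "a \<in> {lu..hu}" "a' \<in> {lu..hu}" for a a' b
    unfolding F_q
  proof (rule sup_le_shift[OF ne bdd])
    fix P assume P: "P \<in> Ps"
    have "\<bar>a + a' - 2*mu P\<bar> \<le> 4*K" using that Kb bnd[OF P] by auto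
    then have "\<bar>(a - a')*(a + a' - 2*mu P)\<bar> \<le> \<bar>a - a'\<bar> * (4*K)"
      by (simp add: abs_mult mult_left_mono)
    then show "q P a b \<le> q P a' b + 4*K*\<bar>a - a'\<bar>" using qa[of P a b a'] by (simp add: algebra_simps)
  qed
  have Fb: "F a b \<le> F a b' + 4*K*\<bar>b - b'\<bar>" if "b \<in> {lv..hv}" "b' \<in> {lv..hv}" for a b b'
    unfolding F_q
  proof (rule sup_le_shift[OF ne bdd])
    fix P assume P: "P \<in> Ps"
    have "\<bar>2*nu P - b' - b\<bar> \<le> 4*K" using that Kb bnd[OF P] by auto
    then have "\<bar>(b - b')*(2*nu P - b' - b)\<bar> \<le> \<bar>b - b'\<bar> * (4*K)"
      by (simp add: abs_mult mult_left_mono)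
    then show "q P a b \<le> q P a b' + 4*K*\<bar>b - b'\<bar>" using qb[of P a b' b] by (simp add: algebra_simps)
  qed
  have clampU: "F (max lu (min hu a)) b \<le> F a b" for a b
    unfolding F_q
  proof -
    have "q P (max lu (min hu a)) b \<le> q P a b + 0" if P: "P \<in> Ps" for P
    proof -
      have "0 \<le> (a - max lu (min hu a))*(a + max lu (min hu a) - 2*mu P)"
        using lu_le[OF P] luhu
        by (cases "a < lu"; cases "a > hu") (auto intro: mult_nonpos_nonpos mult_nonneg_nonneg)
      then show ?thesis using qa[of P a b "max lu (min hu a)"] by simp
    qed
    then show "(SUP P\<in>Ps. q P (max lu (min hu a)) b) \<le> (SUP P\<in>Ps. q P a b)"
      using sup_le_shift[OF ne bdd, of "\<lambda>P. q P (max lu (min hu a)) b" a b 0] by simp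
  qed
  have clampV: "F a b \<le> F a (max lv (min hv b))" for a b
    unfolding F_q
  proof -
    have "q P a b \<le> q P a (max lv (min hv b)) + 0" if P: "P \<in> Ps" for P
    proof -
      have "0 \<le> (max lv (min hv b) - b)*(2*nu P - b - max lv (min hv b))"
        using lu_le[OF P] luhu
        by (cases "b < lv"; cases "b > hv") (auto intro: mult_nonpos_nonpos mult_nonneg_nonneg)
      then show ?thesis using qb[of P a "max lv (min hv b)" b] by simp
    qed
    then show "(SUP P\<in>Ps. q P a b) \<le> (SUP P\<in>Ps. q P a (max lv (min hv b)))"
      using sup_le_shift[OF ne bdd, of "\<lambda>P. q P a b" a "max lv (min hv b)" 0] by simp
  qed
  have contU: "continuous_on {lu..hu} (\<lambda>a. F a b)" for b
  proof (rule lipschitz_on_continuous_on)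
    show "(4*K)-lipschitz_on {lu..hu} (\<lambda>a. F a b)"
      unfolding lipschitz_on_def dist_real_def
      using K0 Fa[of _ _ b] by (smt (verit) abs_minus_commute)
  qed
  have "\<forall>b. \<exists>a\<in>{lu..hu}. \<forall>y\<in>{lu..hu}. F a b \<le> F y b"
    using continuous_attains_inf[OF compact_Icc _ contU] luhu by auto
  then obtain am where am: "\<And>b. am b \<in> {lu..hu}" "\<And>b y. y \<in> {lu..hu} \<Longrightarrow> F (am b) b \<le> F y b"
    by metis
  have amU: "F (am b) b \<le> F a b" for a b
    using am(2)[of "max lu (min hu a)" b] clampU[of a b] luhu by auto
  define h where "h b = F (am b) b" for b
  have infU: "(INF a. F a b) = h b" for b
    unfolding h_def by (rule cInf_eq_minimum) (auto intro: amU)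
  have infM: "(INF a\<in>{lu..hu}. F a b) = h b" for b
    unfolding h_def using am by (intro cInf_eq_minimum) (auto intro: amU)
  have contV: "continuous_on {lv..hv} h"
  proof (rule lipschitz_on_continuous_on)
    have "h b \<le> h b' + 4*K*\<bar>b - b'\<bar>" if "b \<in> {lv..hv}" "b' \<in> {lv..hv}" for b b'
      using amU[of b "am b'"] Fb[OF that, of "am b'"] unfolding h_def by linarith
    then show "(4*K)-lipschitz_on {lv..hv} h"
      unfolding lipschitz_on_def dist_real_def
      using K0 by (smt (verit) abs_minus_commute)
  qed
  obtain b0 where b0: "b0 \<in> {lv..hv}" "\<And>y. y \<in> {lv..hv} \<Longrightarrow> h y \<le> h b0"
    using continuous_attains_sup[OF compact_Icc _ contV] luhu by auto
  have hmax: "h b \<le> h b0" for b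
  proof -
    have "h b \<le> h (max lv (min hv b))"
      using amU[of b "am (max lv (min hv b))"] clampV[of "am (max lv (min hv b))" b]
      unfolding h_def by linarith
    also have "\<dots> \<le> h b0" using b0 luhu by auto
    finally show ?thesis .
  qed
  have m1: "is_maxmin UNIV UNIV F (h b0)"
    unfolding is_maxmin_def infU
  proof (intro conjI ballI)
    show "\<exists>a\<in>UNIV. \<forall>a'\<in>UNIV. F a b \<le> F a' b" for b using amU by blast
    show "\<exists>b\<in>UNIV. h b = h b0 \<and> (\<forall>b'\<in>UNIV. h b' \<le> h b0)" using hmax by blast
  qed
  have m2: "is_maxmin {lu..hu} {lv..hv} F (h b0)"
    unfolding is_maxmin_def infM
  proof (intro conjI ballI)
    show "\<exists>a\<in>{lu..hu}. \<forall>a'\<in>{lu..hu}. F a b \<le> F a' b" for b using am by blast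
    show "\<exists>b\<in>{lv..hv}. h b = h b0 \<and> (\<forall>b'\<in>{lv..hv}. h b' \<le> h b0)" using hmax b0 by blast
  qed
  show ?thesis using m1 m2 unfolding lu_def hu_def lv_def hv_def by blast
qed


lemma absle: "\<bar>x\<bar> \<le> 1 + x\<^sup>2" for x :: real
proof -
  have "0 \<le> (\<bar>x\<bar> - 1/2)^2" by simp
  then show ?thesis by (simp add: power2_eq_square algebra_simps abs_mult_self_eq)
qed

lemma int1: "prob_space P \<Longrightarrow> (\<integral>\<omega>. (1::real) \<partial>P) = 1"
  using prob_space.prob_space[of P] lebesgue_integral_const[of P "1::real"] by simp

lemma intc: "prob_space P \<Longrightarrow> (\<integral>\<omega>. (c::real) \<partial>P) = c"
  using prob_space.prob_space[of P] lebesgue_integral_const[of P c] by simp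

lemma prob_core:
  fixes M :: "'a measure" and Ps :: "'a measure set" and U V :: "'a \<Rightarrow> real" and C :: real
  assumes Ps_ne: "Ps \<noteq> {}"
    and Ps_prob: "\<And>P. P \<in> Ps \<Longrightarrow> prob_space P \<and> sets P = sets M"
    and U_meas: "U \<in> borel_measurable M" and V_meas: "V \<in> borel_measurable M"
    and U_sq: "\<And>P. P \<in> Ps \<Longrightarrow> integrable P (\<lambda>\<omega>. (U \<omega>)\<^sup>2)"
    and V_sq: "\<And>P. P \<in> Ps \<Longrightarrow> integrable P (\<lambda>\<omega>. (V \<omega>)\<^sup>2)"
    and U_fin: "\<And>P. P \<in> Ps \<Longrightarrow> (\<integral>\<omega>. (U \<omega>)\<^sup>2 \<partial>P) \<le> C"
    and V_fin: "\<And>P. P \<in> Ps \<Longrightarrow> (\<integral>\<omega>. (V \<omega>)\<^sup>2 \<partial>P) \<le> C"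
  shows "\<exists>v. is_maxmin UNIV UNIV
                 (\<lambda>\<alpha> \<beta>. upper_exp Ps (\<lambda>\<omega>. (U \<omega> - \<alpha>)\<^sup>2 - (V \<omega> - \<beta>)\<^sup>2)) v
           \<and> is_maxmin (mean_interval Ps U) (mean_interval Ps V)
                 (\<lambda>\<alpha> \<beta>. upper_exp Ps (\<lambda>\<omega>. (U \<omega> - \<alpha>)\<^sup>2 - (V \<omega> - \<beta>)\<^sup>2)) v"
proof -
  define cu where "cu P = (\<integral>\<omega>. (U \<omega>)\<^sup>2 \<partial>P)" for P
  define cv where "cv P = (\<integral>\<omega>. (V \<omega>)\<^sup>2 \<partial>P)" for P
  define mu where "mu P = (\<integral>\<omega>. U \<omega> \<partial>P)" for P
  define nu where "nu P = (\<integral>\<omega>. V \<omega> \<partial>P)" for P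
  have meas: "U \<in> borel_measurable P" "V \<in> borel_measurable P" if "P \<in> Ps" for P
    using U_meas V_meas measurable_cong_sets[OF conjunct2[OF Ps_prob[OF that]] refl] by auto
  have intg: "integrable P U" "integrable P V" if "P \<in> Ps" for P
    using finite_measure.square_integrable_imp_integrable[OF prob_space.axioms(1)[OF conjunct1[OF Ps_prob[OF that]]]]
      meas[OF that] U_sq[OF that] V_sq[OF that] by auto
  have bnd1: "\<bar>(\<integral>\<omega>. W \<omega> \<partial>P)\<bar> \<le> 1 + C"
    if P: "P \<in> Ps" and W: "integrable P W" "integrable P (\<lambda>\<omega>. (W \<omega>)\<^sup>2)"
       "(\<integral>\<omega>. (W \<omega>)\<^sup>2 \<partial>P) \<le> C" for P W
  proof -
    interpret prob_space P using Ps_prob[OF P] by auto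
    have "\<bar>(\<integral>\<omega>. W \<omega> \<partial>P)\<bar> \<le> (\<integral>\<omega>. \<bar>W \<omega>\<bar> \<partial>P)"
      using integral_abs_bound by blast
    also have "\<dots> \<le> (\<integral>\<omega>. 1 + (W \<omega>)\<^sup>2 \<partial>P)"
    proof (rule integral_mono)
      show "integrable P (\<lambda>\<omega>. \<bar>W \<omega>\<bar>)" using W by auto
      show "integrable P (\<lambda>\<omega>. 1 + (W \<omega>)\<^sup>2)" using W by auto
      show "\<bar>W \<omega>\<bar> \<le> 1 + (W \<omega>)\<^sup>2" for \<omega>
        by (rule absle)
    qed
    also have "\<dots> = 1 + (\<integral>\<omega>. (W \<omega>)\<^sup>2 \<partial>P)"
      using W int1[OF prob_space_axioms] by (subst Bochner_Integration.integral_add) auto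
    finally show ?thesis using W by linarith
  qed
  obtain P0 where P0: "P0 \<in> Ps" using Ps_ne by blast
  have "0 \<le> (\<integral>\<omega>. (U \<omega>)\<^sup>2 \<partial>P0)" by (rule Bochner_Integration.integral_nonneg) simp
  then have C0: "0 \<le> C" using U_fin[OF P0] by linarith
  have bnd: "\<bar>cu P\<bar> \<le> 1 + C \<and> \<bar>mu P\<bar> \<le> 1 + C \<and> \<bar>cv P\<bar> \<le> 1 + C \<and> \<bar>nu P\<bar> \<le> 1 + C"
    if P: "P \<in> Ps" for P
  proof -
    have "0 \<le> cu P" "0 \<le> cv P" unfolding cu_def cv_def by (auto intro: integral_nonneg_AE)
    then show ?thesis using U_fin[OF P] V_fin[OF P] bnd1[OF P intg(1)[OF P] U_sq[OF P] U_fin[OF P]]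
      bnd1[OF P intg(2)[OF P] V_sq[OF P] V_fin[OF P]] unfolding cu_def cv_def mu_def nu_def by auto
  qed
  have inteq: "(\<integral>\<omega>. (U \<omega> - a)\<^sup>2 - (V \<omega> - b)\<^sup>2 \<partial>P) =
      cu P - 2*a*mu P + a^2 - (cv P - 2*b*nu P + b^2)" if P: "P \<in> Ps" for P a b
  proof -
    interpret prob_space P using Ps_prob[OF P] by auto
    have e: "(\<lambda>\<omega>. (U \<omega> - a)\<^sup>2 - (V \<omega> - b)\<^sup>2) =
      (\<lambda>\<omega>. (((U \<omega>)\<^sup>2 - (2*a) * U \<omega>) - ((V \<omega>)\<^sup>2 - (2*b) * V \<omega>)) + (a^2 - b^2))"
      by (auto simp: power2_eq_square algebra_simps)
    show ?thesis unfolding e cu_def cv_def mu_def nu_def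
      using intg[OF P] U_sq[OF P] V_sq[OF P] prob_space
      by (simp add: integral_add integral_diff)
  qed
  have ueq: "upper_exp Ps (\<lambda>\<omega>. (U \<omega> - a)\<^sup>2 - (V \<omega> - b)\<^sup>2) =
      (SUP P\<in>Ps. cu P - 2*a*mu P + a^2 - (cv P - 2*b*nu P + b^2))" for a b
    unfolding upper_exp_def using inteq by (intro SUP_cong) auto
  have mU: "mean_interval Ps U = {-(SUP P\<in>Ps. - mu P) .. (SUP P\<in>Ps. mu P)}"
    and mV: "mean_interval Ps V = {-(SUP P\<in>Ps. - nu P) .. (SUP P\<in>Ps. nu P)}"
    unfolding mean_interval_def upper_exp_def mu_def nu_def by simp_all
  show ?thesis unfolding ueq mU mV
    by (rule core[OF Ps_ne bnd])
qed

lemma maxmin_to_minmax: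
  fixes g f :: "real \<Rightarrow> real \<Rightarrow> real"
  assumes "is_maxmin B A g v" "\<And>a b. f a b = - g b a"
  shows "is_minmax A B f (-v)"
proof -
  have s: "(SUP b\<in>B. f a b) = - (INF b\<in>B. g b a)" for a
    unfolding assms(2) Inf_real_def by (simp add: image_image)
  show ?thesis using assms(1) unfolding is_minmax_def is_maxmin_def s assms(2)
    by (metis neg_le_iff_le)
qed


theorem lemma3p13:
  fixes M :: "'a measure" and Ps :: "'a measure set" and X Y :: "'a \<Rightarrow> real"
  assumes Ps_ne: "Ps \<noteq> {}"
    and Ps_prob: "\<And>P. P \<in> Ps \<Longrightarrow> prob_space P \<and> sets P = sets M"
    and X_meas: "X \<in> borel_measurable M" and Y_meas: "Y \<in> borel_measurable M"
    and X_sq: "\<And>P. P \<in> Ps \<Longrightarrow> integrable P (\<lambda>\<omega>. (X \<omega>)\<^sup>2)"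
    and Y_sq: "\<And>P. P \<in> Ps \<Longrightarrow> integrable P (\<lambda>\<omega>. (Y \<omega>)\<^sup>2)"
    and X_fin: "bdd_above ((\<lambda>P. \<integral>\<omega>. (X \<omega>)\<^sup>2 \<partial>P) ` Ps)"
    and Y_fin: "bdd_above ((\<lambda>P. \<integral>\<omega>. (Y \<omega>)\<^sup>2 \<partial>P) ` Ps)"
  defines "U \<equiv> (\<lambda>\<omega>. (X \<omega> + Y \<omega>) / 2)"
    and "V \<equiv> (\<lambda>\<omega>. (X \<omega> - Y \<omega>) / 2)"
  shows "(\<exists>v. is_maxmin UNIV UNIV
                 (\<lambda>\<alpha> \<beta>. upper_exp Ps (\<lambda>\<omega>. (U \<omega> - \<alpha>)\<^sup>2 - (V \<omega> - \<beta>)\<^sup>2)) v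
           \<and> is_maxmin (mean_interval Ps U) (mean_interval Ps V)
                 (\<lambda>\<alpha> \<beta>. upper_exp Ps (\<lambda>\<omega>. (U \<omega> - \<alpha>)\<^sup>2 - (V \<omega> - \<beta>)\<^sup>2)) v)
         \<and> (\<exists>w. is_minmax UNIV UNIV
                 (\<lambda>\<alpha> \<beta>. - upper_exp Ps (\<lambda>\<omega>. - (U \<omega> - \<alpha>)\<^sup>2 + (V \<omega> - \<beta>)\<^sup>2)) w
           \<and> is_minmax (mean_interval Ps U) (mean_interval Ps V)
                 (\<lambda>\<alpha> \<beta>. - upper_exp Ps (\<lambda>\<omega>. - (U \<omega> - \<alpha>)\<^sup>2 + (V \<omega> - \<beta>)\<^sup>2)) w)"
proof -
  obtain BX where BX: "\<And>P. P \<in> Ps \<Longrightarrow> (\<integral>\<omega>. (X \<omega>)\<^sup>2 \<partial>P) \<le> BX"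
    using X_fin unfolding bdd_above_def by auto
  obtain BY where BY: "\<And>P. P \<in> Ps \<Longrightarrow> (\<integral>\<omega>. (Y \<omega>)\<^sup>2 \<partial>P) \<le> BY"
    using Y_fin unfolding bdd_above_def by auto
  have U_meas: "U \<in> borel_measurable M" and V_meas: "V \<in> borel_measurable M"
    unfolding U_def V_def using X_meas Y_meas by auto
  have pw: "((a + b)/2)\<^sup>2 \<le> a\<^sup>2 + b\<^sup>2" "((a - b)/2)\<^sup>2 \<le> a\<^sup>2 + b\<^sup>2" for a b :: real
  proof -
    have "0 \<le> (a - b)^2" "0 \<le> (a + b)^2" by simp_all
    then show "((a + b)/2)\<^sup>2 \<le> a\<^sup>2 + b\<^sup>2" "((a - b)/2)\<^sup>2 \<le> a\<^sup>2 + b\<^sup>2"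
      by (simp_all add: power2_eq_square field_simps)
  qed
  have sq: "integrable P (\<lambda>\<omega>. (U \<omega>)\<^sup>2) \<and> integrable P (\<lambda>\<omega>. (V \<omega>)\<^sup>2) \<and>
      (\<integral>\<omega>. (U \<omega>)\<^sup>2 \<partial>P) \<le> BX + BY \<and> (\<integral>\<omega>. (V \<omega>)\<^sup>2 \<partial>P) \<le> BX + BY" if P: "P \<in> Ps" for P
  proof -
    have ms: "sets P = sets M" using Ps_prob[OF P] by auto
    have mX: "X \<in> borel_measurable P" "Y \<in> borel_measurable P"
      using X_meas Y_meas measurable_cong_sets[OF ms refl] by auto
    have iS: "integrable P (\<lambda>\<omega>. (X \<omega>)\<^sup>2 + (Y \<omega>)\<^sup>2)" using X_sq[OF P] Y_sq[OF P] by auto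
    have iU: "integrable P (\<lambda>\<omega>. (U \<omega>)\<^sup>2)"
      by (rule Bochner_Integration.integrable_bound[OF iS]) (use mX pw in \<open>auto simp: U_def\<close>)
    have iV: "integrable P (\<lambda>\<omega>. (V \<omega>)\<^sup>2)"
      by (rule Bochner_Integration.integrable_bound[OF iS]) (use mX pw in \<open>auto simp: V_def\<close>)
    have eS: "(\<integral>\<omega>. (X \<omega>)\<^sup>2 + (Y \<omega>)\<^sup>2 \<partial>P) \<le> BX + BY"
      using BX[OF P] BY[OF P] X_sq[OF P] Y_sq[OF P] by simp
    have "(\<integral>\<omega>. (U \<omega>)\<^sup>2 \<partial>P) \<le> (\<integral>\<omega>. (X \<omega>)\<^sup>2 + (Y \<omega>)\<^sup>2 \<partial>P)"
      using iU iS pw unfolding U_def by (intro integral_mono) auto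
    moreover have "(\<integral>\<omega>. (V \<omega>)\<^sup>2 \<partial>P) \<le> (\<integral>\<omega>. (X \<omega>)\<^sup>2 + (Y \<omega>)\<^sup>2 \<partial>P)"
      using iV iS pw unfolding V_def by (intro integral_mono) auto
    ultimately show ?thesis using iU iV eS by linarith
  qed
  have part1: "\<exists>v. is_maxmin UNIV UNIV
                 (\<lambda>\<alpha> \<beta>. upper_exp Ps (\<lambda>\<omega>. (U \<omega> - \<alpha>)\<^sup>2 - (V \<omega> - \<beta>)\<^sup>2)) v
           \<and> is_maxmin (mean_interval Ps U) (mean_interval Ps V)
                 (\<lambda>\<alpha> \<beta>. upper_exp Ps (\<lambda>\<omega>. (U \<omega> - \<alpha>)\<^sup>2 - (V \<omega> - \<beta>)\<^sup>2)) v"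
    by (rule prob_core[OF Ps_ne Ps_prob U_meas V_meas]) (use sq in auto)
  have "\<exists>v. is_maxmin UNIV UNIV
                 (\<lambda>\<beta> \<alpha>. upper_exp Ps (\<lambda>\<omega>. (V \<omega> - \<beta>)\<^sup>2 - (U \<omega> - \<alpha>)\<^sup>2)) v
           \<and> is_maxmin (mean_interval Ps V) (mean_interval Ps U)
                 (\<lambda>\<beta> \<alpha>. upper_exp Ps (\<lambda>\<omega>. (V \<omega> - \<beta>)\<^sup>2 - (U \<omega> - \<alpha>)\<^sup>2)) v"
    by (rule prob_core[OF Ps_ne Ps_prob V_meas U_meas]) (use sq in auto)
  then obtain v where v:
    "is_maxmin UNIV UNIV (\<lambda>\<beta> \<alpha>. upper_exp Ps (\<lambda>\<omega>. (V \<omega> - \<beta>)\<^sup>2 - (U \<omega> - \<alpha>)\<^sup>2)) v"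
    "is_maxmin (mean_interval Ps V) (mean_interval Ps U)
                 (\<lambda>\<beta> \<alpha>. upper_exp Ps (\<lambda>\<omega>. (V \<omega> - \<beta>)\<^sup>2 - (U \<omega> - \<alpha>)\<^sup>2)) v" by blast
  have feq: "- upper_exp Ps (\<lambda>\<omega>. - (U \<omega> - a)\<^sup>2 + (V \<omega> - b)\<^sup>2)
      = - upper_exp Ps (\<lambda>\<omega>. (V \<omega> - b)\<^sup>2 - (U \<omega> - a)\<^sup>2)" for a b by simp
  have part2: "\<exists>w. is_minmax UNIV UNIV
                 (\<lambda>\<alpha> \<beta>. - upper_exp Ps (\<lambda>\<omega>. - (U \<omega> - \<alpha>)\<^sup>2 + (V \<omega> - \<beta>)\<^sup>2)) w
           \<and> is_minmax (mean_interval Ps U) (mean_interval Ps V)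
                 (\<lambda>\<alpha> \<beta>. - upper_exp Ps (\<lambda>\<omega>. - (U \<omega> - \<alpha>)\<^sup>2 + (V \<omega> - \<beta>)\<^sup>2)) w"
    using maxmin_to_minmax[OF v(1) feq] maxmin_to_minmax[OF v(2) feq] by blast
  show ?thesis using part1 part2 by blast
qed

end
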